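(* Let $S$ be a nonempty set of graphs on $\Pi$. Then for every integer $i$ with $1\le i<\mathrm{eqdom}(S)$, $(i+(n-\mathrm{cov}_i(S)))$-set agreement is solvable in one round on the closed-above model generated by $\mathrm{Sym}(S)$.
   Context: Fix a set of $n$ processes $\Pi=\{p_1,\dots,p_n\}$. A graph is a directed graph with vertex set $\Pi$; every graph is assumed to contain all self-loops $(p,p)$. For a graph $G$ and $p\in\Pi$, $Out_G(p)=\{q:(p,q)\in E(G)\}$ and $In_G(p)=\{q:(q,p)\in E(G)\}$; for $P\subseteq\Pi$, $Out_G(P)=\bigcup_{p\in P}Out_G(p)$. Computation proceeds in failure-free, communication-closed rounds: in each round $r$ a graph $G_r$ is chosen and each process $p$ receives in round $r$ exactly the round-$r$ messages of the processes in $In_{G_r}(p)$. A communication model is a set of infinite sequences of graphs; an execution is allowed iff its sequence of round graphs belongs to the model. For a graph $G$, $\uparrow G=\{H: E(H)\supseteq E(G)\}$. The closed-above model generated by a set $S$ of graphs is $(\bigcup_{G\in S}\uparrow G)^\omega$. $\mathrm{Sym}(S)=\{\pi(G): G\in S,\ \pi \text{ a permutation of }\Pi\}$, where $\pi(G)$ has edges $\{(\pi(u),\pi(v)):(u,v)\in E(G)\}$. In $k$-set agreement each process starts with an input from a totally ordered set $V_{in}$ and must decide a value so that every decided value is the input of some process and at most $k$ distinct values are decided; it is solvable in $r$ rounds on a model if some algorithm guarantees this, with all processes deciding after $r$ rounds, in every allowed execution and for every input assignment. $\mathrm{eqdom}(G)=\min\{i\in[1,n]: \forall P\subseteq\Pi,\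 |P|=i\Rightarrow Out_G(P)=\Pi\}$, $\mathrm{eqdom}(S)=\max_{G\in S}\mathrm{eqdom}(G)$, $\mathrm{cov}_i(G)=\min_{P\subseteq\Pi,|P|=i}|Out_G(P)|$ and $\mathrm{cov}_i(S)=\min_{G\in S}\mathrm{cov}_i(G)$. *)

theory Defs
  imports Main "HOL-Library.Cardinality"
begin

text \<open>Processes are the elements of a finite type 'p (so \<Pi> = UNIV and n = CARD('p)).
A graph is its edge set; it must contain all self-loops.\<close>

type_synonym 'p graph = "('p \<times> 'p) set"

definition is_graph :: "'p graph \<Rightarrow> bool" where
  "is_graph G \<longleftrightarrow> (\<forall>p. (p, p) \<in> G)"

definition Out :: "'p graph \<Rightarrow> 'p \<Rightarrow> 'p set" where
  "Out G p = {q. (p, q) \<in> G}"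

definition In :: "'p graph \<Rightarrow> 'p \<Rightarrow> 'p set" where
  "In G p = {q. (q, p) \<in> G}"

definition OutSet :: "'p graph \<Rightarrow> 'p set \<Rightarrow> 'p set" where
  "OutSet G P = (\<Union>p\<in>P. Out G p)"

definition eqdom :: "('p::finite) graph \<Rightarrow> nat" where
  "eqdom G = (LEAST i. 1 \<le> i \<and> i \<le> CARD('p) \<and>
      (\<forall>P::'p set. card P = i \<longrightarrow> OutSet G P = UNIV))"

definition eqdom_set :: "('p::finite) graph set \<Rightarrow> nat" where
  "eqdom_set S = Max (eqdom ` S)"

definition cov :: "nat \<Rightarrow> ('p::finite) graph \<Rightarrow> nat" where
  "cov i G = Min {card (OutSet G P) | P::'p set. card P = i}"

definition cov_set :: "nat \<Rightarrow> ('p::finite) graph set \<Rightarrow> nat" where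
  "cov_set i S = Min (cov i ` S)"

text \<open>Upward closure of a graph and the closed-above model generated by S
  (infinite sequences of graphs, indexed by rounds r = 0,1,2,...).\<close>

definition up :: "'p graph \<Rightarrow> 'p graph set" where
  "up G = {H. G \<subseteq> H}"

definition closed_above_model :: "'p graph set \<Rightarrow> (nat \<Rightarrow> 'p graph) set" where
  "closed_above_model S = {\<sigma>. \<forall>r. \<sigma> r \<in> (\<Union>G\<in>S. up G)}"

definition perm_graph :: "('p \<Rightarrow> 'p) \<Rightarrow> 'p graph \<Rightarrow> 'p graph" where
  "perm_graph \<pi> G = {(\<pi> u, \<pi> v) | u v. (u, v) \<in> G}"

definition Sym :: "'p graph set \<Rightarrow> 'p graph set" where
  "Sym S = {perm_graph \<pi> G | \<pi> G. G \<in> S \<and> bij \<pi>}"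

text \<open>One-round algorithms, w.l.o.g. full-information: in round 1 every process
  sends its input; process p's view is the partial map giving the input of each
  q \<in> In_{G_1}(p); its decision is a function of its identity and its view.
  k-set agreement is solvable in one round on model M (inputs of type 'v) if some
  decision function satisfies validity and k-agreement in every execution of M and
  every input assignment.\<close>

definition view :: "'p graph \<Rightarrow> ('p \<Rightarrow> 'v) \<Rightarrow> 'p \<Rightarrow> ('p \<Rightarrow> 'v option)" where
  "view G x p = (\<lambda>q. if q \<in> In G p then Some (x q) else None)"

definition set_agreement_solvable_one_round ::
    "nat \<Rightarrow> (nat \<Rightarrow> ('p::finite) graph) set \<Rightarrow> 'v itself \<Rightarrow> bool" where
  "set_agreement_solvable_one_round k M (_ :: 'v itself) \<longleftrightarrow>
     (\<exists>dec :: 'p \<Rightarrow> ('p \<Rightarrow> 'v option) \<Rightarrow> 'v.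
        \<forall>\<sigma>\<in>M. \<forall>x :: 'p \<Rightarrow> 'v.
          (\<forall>p. dec p (view (\<sigma> 0) x p) \<in> range x) \<and>
          card (range (\<lambda>p. dec p (view (\<sigma> 0) x p))) \<le> k)"

end

theory Submission
  imports Defs
begin

lemma smallest_subset:
  fixes x :: "'p \<Rightarrow> 'v::linorder"
  assumes "finite A" "k \<le> card A"
  shows "\<exists>P\<subseteq>A. card P = k \<and> (\<forall>q\<in>P. \<forall>r\<in>A - P. x q \<le> x r)"
  using assms(2)
proof (induction k)
  case 0
  then show ?case by (intro exI[of _ "{}"]) auto
next
  case (Suc k)
  then obtain P where P: "P \<subseteq> A" "card P = k" "\<forall>q\<in>P. \<forall>r\<in>A - P. x q \<le> x r" by auto
  have fP: "finite P" using P(1) assms(1) finite_subset by blast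
  have "card P < card A" using P Suc by simp
  then have ne: "A - P \<noteq> {}" using P(1) fP by (metis Diff_eq_empty_iff card_mono assms(1) leD)
  have fin: "finite (x ` (A - P))" using assms(1) by simp
  have "Min (x ` (A - P)) \<in> x ` (A - P)" using fin ne by (intro Min_in) auto
  then obtain r where r: "r \<in> A - P" "x r = Min (x ` (A - P))" by auto
  have rmin: "\<forall>r'\<in>A - P. x r \<le> x r'" using r fin by auto
  show ?case
    apply (intro exI[of _ "insert r P"])
    using P r rmin fP by auto
qed

lemma recv: "{y. \<exists>q. view H x p q = Some y} = x ` In H p"
  by (auto simp: view_def split: if_splits)

lemma outset_perm:
  assumes "bij \<pi>"
  shows "OutSet (perm_graph \<pi> G) P = \<pi> ` OutSet G (inv \<pi> ` P)"
proof -
  have inv1: "\<And>u. inv \<pi> (\<pi> u) = u" using assms bij_is_inj inv_f_f by metis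
  have inv2: "\<And>u. \<pi> (inv \<pi> u) = u" using assms bij_is_surj surj_f_inv_f by metis
  show ?thesis
  proof (rule set_eqI, rule iffI)
    fix q assume "q \<in> OutSet (perm_graph \<pi> G) P"
    then obtain u v where "\<pi> u \<in> P" "q = \<pi> v" "(u,v) \<in> G"
      unfolding OutSet_def Out_def perm_graph_def by auto
    then show "q \<in> \<pi> ` OutSet G (inv \<pi> ` P)"
      unfolding OutSet_def Out_def using inv1 by (metis (mono_tags, lifting) UN_iff image_eqI mem_Collect_eq)
  next
    fix q assume "q \<in> \<pi> ` OutSet G (inv \<pi> ` P)"
    then obtain p v where "p \<in> P" "q = \<pi> v" "(inv \<pi> p,v) \<in> G"
      unfolding OutSet_def Out_def by auto
    then show "q \<in> OutSet (perm_graph \<pi> G) P"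
      unfolding OutSet_def Out_def perm_graph_def using inv2 by (metis (mono_tags, lifting) UN_iff mem_Collect_eq)
  qed
qed

theorem mainTheorem5:
  fixes S :: "('p::finite) graph set" and i :: nat
  assumes "S \<noteq> {}"
    and "\<forall>G\<in>S. is_graph G"
    and "1 \<le> i" and "i < eqdom_set S"
  shows "set_agreement_solvable_one_round (i + (CARD('p) - cov_set i S))
           (closed_above_model (Sym S)) TYPE('v::linorder)"
proof -
  define dec :: "'p \<Rightarrow> ('p \<Rightarrow> 'v option) \<Rightarrow> 'v" where
    "dec = (\<lambda>p v. Min {y. \<exists>q. v q = Some y})"
  show ?thesis
    unfolding set_agreement_solvable_one_round_def
  proof (intro exI[of _ dec] ballI allI)
    fix \<sigma> and x :: "'p \<Rightarrow> 'v"
    assume "\<sigma> \<in> closed_above_model (Sym S)"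
    then obtain G \<pi> where G: "G \<in> S" "bij \<pi>" "perm_graph \<pi> G \<subseteq> \<sigma> 0"
      unfolding closed_above_model_def Sym_def up_def by blast
    define H where "H = \<sigma> 0"
    have inv2: "\<And>u. \<pi> (inv \<pi> u) = u" using G(2) bij_is_surj surj_f_inv_f by metis
    have loop: "(p, p) \<in> H" for p
    proof -
      have "(inv \<pi> p, inv \<pi> p) \<in> G" using assms(2) G(1) unfolding is_graph_def by auto
      then have "(\<pi> (inv \<pi> p), \<pi> (inv \<pi> p)) \<in> perm_graph \<pi> G" unfolding perm_graph_def by blast
      then show ?thesis using G(3) inv2 H_def by auto
    qed
    have decp: "dec p (view H x p) = Min (x ` In H p)" for p
      unfolding dec_def recv ..
    have inIn: "p \<in> In H p" for p using loop by (simp add: In_def)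
    have decin: "dec p (view H x p) \<in> x ` In H p" for p
      unfolding decp using inIn by (intro Min_in) auto
    have V: "\<forall>p. dec p (view (\<sigma> 0) x p) \<in> range x"
      using decin H_def by auto
    let ?n = "CARD('p)"
    have "card (range (\<lambda>p. dec p (view (\<sigma> 0) x p))) \<le> i + (?n - cov_set i S)"
    proof (cases "?n \<le> i")
      case True
      have "card (range (\<lambda>p. dec p (view (\<sigma> 0) x p))) \<le> ?n"
        by (rule card_image_le) simp
      then show ?thesis using True by linarith
    next
      case False
      obtain P :: "'p set" where P: "card P = i" "\<forall>q\<in>P. \<forall>r\<in>UNIV - P. x q \<le> x r"
        using smallest_subset[of "UNIV :: 'p set" i x] False by auto
      define Ob where "Ob = OutSet H P"
      have sub: "range (\<lambda>p. dec p (view H x p)) \<subseteq> x ` P \<union> (\<lambda>p. dec p (view H x p)) ` (UNIV - Ob)"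
      proof
        fix y assume "y \<in> range (\<lambda>p. dec p (view H x p))"
        then obtain p where y: "y = dec p (view H x p)" by auto
        show "y \<in> x ` P \<union> (\<lambda>p. dec p (view H x p)) ` (UNIV - Ob)"
        proof (cases "p \<in> Ob")
          case False then show ?thesis using y by auto
        next
          case True
          then obtain q where q: "q \<in> P" "q \<in> In H p"
            unfolding Ob_def OutSet_def Out_def In_def by auto
          obtain q' where q': "q' \<in> In H p" "y = x q'" using decin[of p] y by auto
          have "y \<le> x q" using q unfolding y decp by (intro Min_le) auto
          show ?thesis
          proof (cases "q' \<in> P")
            case True then show ?thesis using q' by auto
          next
            case False
            then have "x q \<le> x q'" using P(2) q(1) by auto
            then have "y = x q" using \<open>y \<le> x q\<close> q' by auto
            then show ?thesis using q by auto
          qed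
        qed
      qed
      have c1: "card (range (\<lambda>p. dec p (view H x p))) \<le> card (x ` P) + card ((\<lambda>p. dec p (view H x p)) ` (UNIV - Ob))"
        by (rule order_trans[OF card_mono[OF _ sub] card_Un_le]) auto
      have c2: "card (x ` P) \<le> i" using P(1) card_image_le by (metis finite)
      have c3: "card ((\<lambda>p. dec p (view H x p)) ` (UNIV - Ob)) \<le> ?n - card Ob"
        by (metis card_Diff_subset card_image_le finite subset_UNIV)
      have fS: "finite S" by simp
      have "cov_set i S \<le> cov i G" unfolding cov_set_def using fS G(1) by auto
      also have "cov i G \<le> card (OutSet G (inv \<pi> ` P))"
      proof -
        have "card (inv \<pi> ` P) = i"
          using P(1) G(2) by (metis bij_betw_subset bij_imp_bij_inv card_image bij_is_inj inj_on_subset subset_UNIV)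
        then show ?thesis unfolding cov_def by (intro Min_le) auto
      qed
      also have "\<dots> = card (OutSet (perm_graph \<pi> G) P)"
        unfolding outset_perm[OF G(2)] using G(2)
        by (metis bij_is_inj card_image inj_on_subset subset_UNIV)
      also have "\<dots> \<le> card Ob"
        unfolding Ob_def H_def using G(3) by (intro card_mono) (auto simp: OutSet_def Out_def)
      finally have "cov_set i S \<le> card Ob" .
      moreover have "card Ob \<le> ?n" by (rule card_mono) auto
      ultimately show ?thesis using c1 c2 c3 unfolding H_def by linarith
    qed
    then show "(\<forall>p. dec p (view (\<sigma> 0) x p) \<in> range x) \<and> card (range (\<lambda>p. dec p (view (\<sigma> 0) x p))) \<le> i + (?n - cov_set i S)"
      using V by simp
  qed
qed

end
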